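(* Let $R$ be a local Artinian ring which is not a division ring, and let $C=C(R)$ be its center. (1) If $R$ is centrally essential, then $R/J(R)$ is commutative and $C\cap M\neq 0$ for every minimal right ideal $M$ of $R$. (2) If $R/J(R)$ is commutative, $\mathrm{Soc}(R_C)=\mathrm{Soc}(R_R)$, and $C\cap M\neq 0$ for every minimal right ideal $M$ of $R$, then $R$ is centrally essential.
   Context: All rings are associative with non-zero identity. A ring $R$ is centrally essential if for every non-zero $a\in R$ there exist non-zero elements $x,y\in C(R)$ with $ax=y$. A ring is local if $R/J(R)$ is a division ring, where $J(R)$ is the Jacobson radical. $\mathrm{Soc}(R_R)$ is the sum of all minimal right ideals of $R$, and $\mathrm{Soc}(R_C)$ is the sum of all simple $C$-submodules of $R$ regarded as a $C$-module. *)

theory Defs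
  imports Main
begin

definition right_ideal :: "'a::ring_1 set \<Rightarrow> bool" where
  "right_ideal I \<longleftrightarrow> 0 \<in> I \<and> (\<forall>x\<in>I. \<forall>y\<in>I. x + y \<in> I) \<and> (\<forall>x\<in>I. - x \<in> I)
     \<and> (\<forall>x\<in>I. \<forall>r. x * r \<in> I)"

definition maximal_right_ideal :: "'a::ring_1 set \<Rightarrow> bool" where
  "maximal_right_ideal M \<longleftrightarrow> right_ideal M \<and> M \<noteq> UNIV \<and>
     (\<forall>I. right_ideal I \<and> M \<subseteq> I \<longrightarrow> I = M \<or> I = UNIV)"

definition jacobson :: "'a::ring_1 set" where
  "jacobson = \<Inter> {M. maximal_right_ideal M}"

definition minimal_right_ideal :: "'a::ring_1 set \<Rightarrow> bool" where
  "minimal_right_ideal M \<longleftrightarrow> right_ideal M \<and> M \<noteq> {0} \<and>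
     (\<forall>I. right_ideal I \<and> I \<subseteq> M \<longrightarrow> I = {0} \<or> I = M)"

definition center :: "'a::ring_1 set" where
  "center = {c. \<forall>x. c * x = x * c}"

definition division_ring :: "'a::ring_1 itself \<Rightarrow> bool" where
  "division_ring _ \<longleftrightarrow> (\<forall>x::'a. x \<noteq> 0 \<longrightarrow> (\<exists>y. x * y = 1 \<and> y * x = 1))"

text \<open>R/J(R) is a division ring, written out in R: the quotient is nonzero
  (J \<noteq> R) and every class outside J has a two-sided inverse modulo J.\<close>
definition local_ring :: "'a::ring_1 itself \<Rightarrow> bool" where
  "local_ring _ \<longleftrightarrow> (jacobson :: 'a set) \<noteq> UNIV \<and>
     (\<forall>x::'a. x \<notin> jacobson \<longrightarrow> (\<exists>y. x * y - 1 \<in> jacobson \<and> y * x - 1 \<in> jacobson))"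

definition quotient_jacobson_commutative :: "'a::ring_1 itself \<Rightarrow> bool" where
  "quotient_jacobson_commutative _ \<longleftrightarrow> (\<forall>x y::'a. x * y - y * x \<in> jacobson)"

definition right_artinian :: "'a::ring_1 itself \<Rightarrow> bool" where
  "right_artinian _ \<longleftrightarrow> (\<forall>f :: nat \<Rightarrow> 'a set.
     (\<forall>n. right_ideal (f n) \<and> f (Suc n) \<subseteq> f n) \<longrightarrow> (\<exists>N. \<forall>n\<ge>N. f n = f N))"

definition centrally_essential :: "'a::ring_1 itself \<Rightarrow> bool" where
  "centrally_essential _ \<longleftrightarrow> (\<forall>a::'a. a \<noteq> 0 \<longrightarrow>
     (\<exists>x\<in>center. \<exists>y\<in>center. x \<noteq> 0 \<and> y \<noteq> 0 \<and> a * x = y))"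

definition add_subgroup :: "'a::ring_1 set \<Rightarrow> bool" where
  "add_subgroup S \<longleftrightarrow> 0 \<in> S \<and> (\<forall>x\<in>S. \<forall>y\<in>S. x + y \<in> S) \<and> (\<forall>x\<in>S. - x \<in> S)"

definition sum_of :: "'a::ring_1 set set \<Rightarrow> 'a set" where
  "sum_of F = \<Inter> {S. add_subgroup S \<and> \<Union> F \<subseteq> S}"

definition soc_right :: "'a::ring_1 set" where
  "soc_right = sum_of {M. minimal_right_ideal M}"

text \<open>R regarded as a (right) module over its center C.\<close>
definition C_submodule :: "'a::ring_1 set \<Rightarrow> bool" where
  "C_submodule N \<longleftrightarrow> add_subgroup N \<and> (\<forall>x\<in>N. \<forall>c\<in>center. x * c \<in> N)"

definition simple_C_submodule :: "'a::ring_1 set \<Rightarrow> bool" where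
  "simple_C_submodule N \<longleftrightarrow> C_submodule N \<and> N \<noteq> {0} \<and>
     (\<forall>K. C_submodule K \<and> K \<subseteq> N \<longrightarrow> K = {0} \<or> K = N)"

definition soc_center :: "'a::ring_1 set" where
  "soc_center = sum_of {N. simple_C_submodule N}"

end

theory Submission
  imports Defs
begin

lemma ri_diff: "right_ideal I \<Longrightarrow> x \<in> I \<Longrightarrow> y \<in> I \<Longrightarrow> x - y \<in> I"
  unfolding right_ideal_def by (metis diff_conv_add_uminus)

lemma ri_one: assumes "right_ideal I" "(1::'a::ring_1) \<in> I" shows "I = UNIV"
proof -
  have "x \<in> I" for x using assms unfolding right_ideal_def by (metis mult_1_left)
  then show ?thesis by blast
qed

lemma jac_ri: "right_ideal (jacobson::'a::ring_1 set)"
  by (auto simp: jacobson_def right_ideal_def maximal_right_ideal_def)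

lemma max_eq_jac:
  assumes L: "local_ring (T::'a::ring_1 itself)" and M: "maximal_right_ideal (M::'a set)"
  shows "M = jacobson"
proof
  show "jacobson \<subseteq> M" using M unfolding jacobson_def by blast
  show "M \<subseteq> jacobson"
  proof
    fix x assume x: "x \<in> M"
    show "x \<in> jacobson"
    proof (rule ccontr)
      assume "x \<notin> jacobson"
      then obtain y where y: "x * y - 1 \<in> jacobson" using L unfolding local_ring_def by blast
      have ri: "right_ideal M" using M unfolding maximal_right_ideal_def by blast
      have "x * y - 1 \<in> M" using y M unfolding jacobson_def by blast
      moreover have "x * y \<in> M" using ri x unfolding right_ideal_def by blast
      ultimately have "x * y - (x * y - 1) \<in> M" using ri_diff ri by blast
      then have "1 \<in> M" by simp
      then show False using ri_one ri M unfolding maximal_right_ideal_def by blast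
    qed
  qed
qed

lemma exists_max:
  assumes I: "right_ideal (I::'a::ring_1 set)" and one: "1 \<notin> I"
  shows "\<exists>M. maximal_right_ideal M \<and> I \<subseteq> M"
proof -
  let ?A = "{K::'a set. right_ideal K \<and> I \<subseteq> K \<and> 1 \<notin> K}"
  have "\<exists>M\<in>?A. \<forall>X\<in>?A. M \<subseteq> X \<longrightarrow> X = M"
  proof (rule subset_Zorn_nonempty)
    show "?A \<noteq> {}" using I one by blast
    fix CC assume ne: "CC \<noteq> {}" and ch: "subset.chain ?A CC"
    have sub: "CC \<subseteq> ?A" and tot: "\<forall>X\<in>CC. \<forall>Y\<in>CC. X \<subseteq> Y \<or> Y \<subseteq> X"
      using ch unfolding subset.chain_def by auto
    have riX: "right_ideal X" if "X \<in> CC" for X using sub that by blast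
    have "right_ideal (\<Union>CC)"
      unfolding right_ideal_def
    proof (intro conjI ballI allI)
      obtain X where X: "X \<in> CC" using ne by blast
      have "0 \<in> X" using riX[OF X] unfolding right_ideal_def by blast
      then show "0 \<in> \<Union>CC" using X by blast
    next
      fix x y assume "x \<in> \<Union>CC" "y \<in> \<Union>CC"
      then obtain X Y where X: "X \<in> CC" "x \<in> X" and Y: "Y \<in> CC" "y \<in> Y" by blast
      show "x + y \<in> \<Union>CC"
      proof (cases "X \<subseteq> Y")
        case True
        then have "x + y \<in> Y" using riX[OF Y(1)] X(2) Y(2) unfolding right_ideal_def by blast
        then show ?thesis using Y(1) by blast
      next
        case False then have "Y \<subseteq> X" using tot X Y by blast
        then have "x + y \<in> X" using riX[OF X(1)] X(2) Y(2) unfolding right_ideal_def by blast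
        then show ?thesis using X(1) by blast
      qed
    next
      fix x assume "x \<in> \<Union>CC"
      then obtain X where X: "X \<in> CC" "x \<in> X" by blast
      then have "- x \<in> X" using riX[OF X(1)] unfolding right_ideal_def by blast
      then show "- x \<in> \<Union>CC" using X by blast
    next
      fix x r assume "x \<in> \<Union>CC"
      then obtain X where X: "X \<in> CC" "x \<in> X" by blast
      then have "x * r \<in> X" using riX[OF X(1)] unfolding right_ideal_def by blast
      then show "x * r \<in> \<Union>CC" using X by blast
    qed
    moreover have "I \<subseteq> \<Union>CC" using ne sub by blast
    moreover have "1 \<notin> \<Union>CC" using sub by blast
    ultimately show "\<Union>CC \<in> ?A" by blast
  qed
  then obtain M where M: "M \<in> ?A" and mx: "\<forall>X\<in>?A. M \<subseteq> X \<longrightarrow> X = M" by blast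
  have "maximal_right_ideal M"
    unfolding maximal_right_ideal_def
  proof (intro conjI allI impI)
    show "right_ideal M" using M by blast
    show "M \<noteq> UNIV" using M by blast
    fix K assume K: "right_ideal K \<and> M \<subseteq> K"
    show "K = M \<or> K = UNIV"
    proof (cases "1 \<in> K")
      case True then show ?thesis using ri_one K by blast
    next
      case False then show ?thesis using K M mx by blast
    qed
  qed
  then show ?thesis using M by blast
qed

context
  fixes T :: "'a::ring_1 itself"
  assumes L: "local_ring T"
begin

lemma proper_sub_jac: "right_ideal (I::'a set) \<Longrightarrow> 1 \<notin> I \<Longrightarrow> I \<subseteq> jacobson"
  using exists_max max_eq_jac[OF L] by blast

lemma one_notin_jac: "(1::'a) \<notin> jacobson"
  using L ri_one jac_ri unfolding local_ring_def by blast

lemma right_inv: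
  assumes x: "(x::'a) \<notin> jacobson" shows "\<exists>v. x * v = 1"
proof (rule ccontr)
  assume nx: "\<not> (\<exists>v. x * v = 1)"
  have ri: "right_ideal (range (\<lambda>r. x * r))"
    unfolding right_ideal_def
  proof (intro conjI ballI allI)
    show "0 \<in> range (\<lambda>r. x * r)" by (metis mult_zero_right rangeI)
    fix a b assume "a \<in> range (\<lambda>r. x * r)" "b \<in> range (\<lambda>r. x * r)"
    then obtain p q where "a = x * p" "b = x * q" by blast
    then show "a + b \<in> range (\<lambda>r. x * r)" by (metis distrib_left rangeI)
  next
    fix a assume "a \<in> range (\<lambda>r. x * r)"
    then obtain p where "a = x * p" by blast
    then show "- a \<in> range (\<lambda>r. x * r)" by (metis mult_minus_right rangeI)
  next
    fix a r assume "a \<in> range (\<lambda>r. x * r)"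
    then obtain p where "a = x * p" by blast
    then show "a * r \<in> range (\<lambda>r. x * r)" by (metis mult.assoc rangeI)
  qed
  have "1 \<notin> range (\<lambda>r. x * r)" using nx by auto
  then have "range (\<lambda>r. x * r) \<subseteq> jacobson" using proper_sub_jac ri by blast
  then have "x * 1 \<in> jacobson" by blast
  then show False using x by simp
qed

lemma unit_notin: "(x::'a) * v = 1 \<Longrightarrow> x \<notin> jacobson"
  using jac_ri one_notin_jac unfolding right_ideal_def by metis

lemma unit:
  assumes x: "(x::'a) \<notin> jacobson" shows "\<exists>v. x * v = 1 \<and> v * x = 1"
proof -
  obtain v where v: "x * v = 1" using right_inv x by blast
  have vJ: "v \<notin> jacobson"
  proof
    assume vj: "v \<in> jacobson"
    let ?e = "v * x"
    have eJ: "?e \<in> jacobson" using vj jac_ri unfolding right_ideal_def by blast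
    have "?e * ?e = v * (x * v) * x" by (simp add: mult.assoc)
    then have ee: "?e * ?e = ?e" using v by simp
    have "1 - ?e \<notin> jacobson"
    proof
      assume "1 - ?e \<in> jacobson"
      then have "(1 - ?e) + ?e \<in> jacobson" using eJ jac_ri unfolding right_ideal_def by blast
      then show False using one_notin_jac by simp
    qed
    then obtain w where w: "(1 - ?e) * w = 1" using right_inv by blast
    have "?e * (1 - ?e) = 0" using ee by (simp add: algebra_simps)
    moreover have "?e = ?e * ((1 - ?e) * w)" using w by simp
    moreover have "?e * ((1 - ?e) * w) = (?e * (1 - ?e)) * w" by (simp add: mult.assoc)
    ultimately have e0: "?e = 0" by simp
    have "v = v * (x * v)" using v by simp
    also have "\<dots> = ?e * v" by (simp add: mult.assoc)
    finally have "v = 0" using e0 by simp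
    then show False using v by simp
  qed
  obtain w where w: "v * w = 1" using right_inv vJ by blast
  have "x = x * (v * w)" using w by simp
  also have "\<dots> = (x * v) * w" by (simp add: mult.assoc)
  finally have "x = w" using v by simp
  then show ?thesis using v w by blast
qed

lemma jac_left: assumes j: "(j::'a) \<in> jacobson" shows "r * j \<in> jacobson"
proof (cases "r \<in> jacobson")
  case True then show ?thesis using j jac_ri unfolding right_ideal_def by blast
next
  case False
  then obtain r' where r': "r * r' = 1" "r' * r = 1" using unit by blast
  show ?thesis
  proof (rule ccontr)
    assume "r * j \<notin> jacobson"
    then obtain w where w: "r * j * w = 1" using unit by blast
    have "r' = r' * (r * j * w)" using w by simp
    also have "\<dots> = (r' * r) * j * w" by (simp add: mult.assoc)
    finally have jw: "j * w = r'" using r' by simp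
    have "j * (w * r) = (j * w) * r" by (simp add: mult.assoc)
    then have "j * (w * r) = 1" using jw r' by simp
    then show False using unit_notin j by blast
  qed
qed

lemma one_minus_unit: assumes "(j::'a) \<in> jacobson" shows "\<exists>v. (1 - j) * v = 1 \<and> v * (1 - j) = 1"
proof -
  have "1 - j \<notin> jacobson"
  proof
    assume "1 - j \<in> jacobson"
    then have "(1 - j) + j \<in> jacobson" using assms jac_ri unfolding right_ideal_def by blast
    then show False using one_notin_jac by simp
  qed
  then show ?thesis using unit by blast
qed

lemma cancel_unit: assumes "(c::'a) * r = 0" "r \<notin> jacobson" shows "c = 0"
proof -
  obtain r' where r': "r * r' = 1" using unit assms(2) by blast
  have "c = c * (r * r')" using r' by simp
  also have "\<dots> = (c * r) * r'" by (simp add: mult.assoc)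
  finally show ?thesis using assms(1) by simp
qed

lemma minimal_ann:
  assumes M: "minimal_right_ideal (M::'a set)" and m: "m \<in> M" and j: "j \<in> jacobson"
  shows "m * j = 0"
proof (rule ccontr)
  assume mj: "m * j \<noteq> 0"
  let ?I = "{m * k | k. k \<in> jacobson}"
  have ri: "right_ideal ?I"
    unfolding right_ideal_def
  proof (intro conjI ballI allI)
    show "0 \<in> ?I" using jac_ri unfolding right_ideal_def by force
    fix x y assume "x \<in> ?I" "y \<in> ?I"
    then obtain a b where "x = m * a" "y = m * b" "a \<in> jacobson" "b \<in> jacobson" by blast
    then show "x + y \<in> ?I" using jac_ri unfolding right_ideal_def by (metis (mono_tags, lifting) distrib_left mem_Collect_eq)
  next
    fix x assume "x \<in> ?I"
    then obtain a where "x = m * a" "a \<in> jacobson" by blast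
    then show "- x \<in> ?I" using jac_ri unfolding right_ideal_def by (metis (mono_tags, lifting) mult_minus_right mem_Collect_eq)
  next
    fix x r assume "x \<in> ?I"
    then obtain a where "x = m * a" "a \<in> jacobson" by blast
    then show "x * r \<in> ?I" using jac_ri unfolding right_ideal_def by (metis (mono_tags, lifting) mult.assoc mem_Collect_eq)
  qed
  have sub: "?I \<subseteq> M" using M m unfolding minimal_right_ideal_def right_ideal_def by blast
  have "?I \<noteq> {0}" using mj j by blast
  then have "?I = M" using M ri sub unfolding minimal_right_ideal_def by blast
  then obtain k where k: "m = m * k" "k \<in> jacobson" using m by blast
  have "m * (1 - k) = 0" using k by (simp add: algebra_simps)
  moreover obtain v where v: "(1 - k) * v = 1" using one_minus_unit[OF k(2)] by blast
  moreover have "m = m * ((1 - k) * v)" using v by simp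
  moreover have "m * ((1 - k) * v) = (m * (1 - k)) * v" by (simp add: mult.assoc)
  ultimately have "m = 0" by simp
  then show False using mj by simp
qed

end

lemma exists_minimal:
  assumes A: "right_artinian (T::'a::ring_1 itself)"
  shows "\<exists>M::'a set. minimal_right_ideal M"
proof (rule ccontr)
  assume no: "\<nexists>M::'a set. minimal_right_ideal M"
  have step: "\<exists>I'. right_ideal I' \<and> I' \<subseteq> I \<and> I' \<noteq> {0} \<and> I' \<noteq> I"
    if "right_ideal (I::'a set)" "I \<noteq> {0}" for I
    using no that unfolding minimal_right_ideal_def by blast
  define f :: "nat \<Rightarrow> 'a set" where
    "f = rec_nat UNIV (\<lambda>_ I. SOME I'. right_ideal I' \<and> I' \<subseteq> I \<and> I' \<noteq> {0} \<and> I' \<noteq> I)"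
  have inv: "right_ideal (f n) \<and> f n \<noteq> {0}" for n
  proof (induction n)
    case 0
    have "(1::'a) \<noteq> 0" by simp
    then have "UNIV \<noteq> {0::'a}" by blast
    then show ?case by (simp add: f_def right_ideal_def)
  next
    case (Suc n)
    have "f (Suc n) = (SOME I'. right_ideal I' \<and> I' \<subseteq> f n \<and> I' \<noteq> {0} \<and> I' \<noteq> f n)"
      by (simp add: f_def)
    then show ?case using someI_ex[OF step[OF conjunct1[OF Suc] conjunct2[OF Suc]]] by simp
  qed
  have st: "f (Suc n) \<subseteq> f n \<and> f (Suc n) \<noteq> f n" for n
  proof -
    have "f (Suc n) = (SOME I'. right_ideal I' \<and> I' \<subseteq> f n \<and> I' \<noteq> {0} \<and> I' \<noteq> f n)"
      by (simp add: f_def)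
    then show ?thesis using someI_ex[OF step[OF conjunct1[OF inv] conjunct2[OF inv]]] by simp
  qed
  obtain N where N: "\<forall>n\<ge>N. f n = f N" using A inv st unfolding right_artinian_def by blast
  have "Suc N \<ge> N" by simp
  then have "f (Suc N) = f N" using N by blast
  then show False using st by blast
qed


lemma center_comm: "c \<in> center \<Longrightarrow> c * x = x * c"
  unfolding center_def by blast

lemma center_mult: assumes cc: "c \<in> center" and dc: "d \<in> center" shows "c * d \<in> center"
proof -
  have "c * d * x = x * (c * d)" for x
  proof -
    have "c * d * x = c * (d * x)" by (simp add: mult.assoc)
    also have "\<dots> = c * (x * d)" using dc center_comm by metis
    also have "\<dots> = (c * x) * d" by (simp add: mult.assoc)
    also have "\<dots> = (x * c) * d" using cc center_comm by metis
    finally show ?thesis by (simp add: mult.assoc)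
  qed
  then show ?thesis unfolding center_def by blast
qed

lemma center_add: "c \<in> center \<Longrightarrow> d \<in> center \<Longrightarrow> c + d \<in> center"
  unfolding center_def by (simp add: distrib_left distrib_right)

lemma center_neg: "c \<in> center \<Longrightarrow> - c \<in> center"
  unfolding center_def by simp

lemma center_0: "0 \<in> center" and center_1: "1 \<in> center"
  unfolding center_def by simp_all

lemma center_inv: assumes c: "c \<in> center" and v: "c * v = 1" "v * c = 1" shows "v \<in> center"
  unfolding center_def
proof
  show "\<forall>x. v * x = x * v"
  proof
    fix x
    have "v * x = v * x * (c * v)" using v by simp
    also have "\<dots> = v * (x * c) * v" by (simp add: mult.assoc)
    also have "\<dots> = v * (c * x) * v" using c center_comm by metis
    also have "\<dots> = (v * c) * x * v" by (simp add: mult.assoc)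
    finally show "v * x = x * v" using v by simp
  qed
qed

lemma ri_range: "right_ideal (range (\<lambda>r. (z::'a::ring_1) * r))"
  unfolding right_ideal_def
proof (intro conjI ballI allI)
  show "0 \<in> range (\<lambda>r. z * r)" by (metis mult_zero_right rangeI)
  fix a b assume "a \<in> range (\<lambda>r. z * r)" "b \<in> range (\<lambda>r. z * r)"
  then obtain p q where "a = z * p" "b = z * q" by blast
  then show "a + b \<in> range (\<lambda>r. z * r)" by (metis distrib_left rangeI)
next
  fix a assume "a \<in> range (\<lambda>r. z * r)"
  then obtain p where "a = z * p" by blast
  then show "- a \<in> range (\<lambda>r. z * r)" by (metis mult_minus_right rangeI)
next
  fix a r assume "a \<in> range (\<lambda>r. z * r)"
  then obtain p where "a = z * p" by blast
  then show "a * r \<in> range (\<lambda>r. z * r)" by (metis mult.assoc rangeI)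
qed

context
  fixes T :: "'a::ring_1 itself"
  assumes L: "local_ring T" and Ar: "right_artinian T"
begin

lemma part1_comm:
  assumes CE: "centrally_essential T"
  shows "quotient_jacobson_commutative T"
proof -
  obtain M :: "'a set" where M: "minimal_right_ideal M" using exists_minimal[OF Ar] by blast
  have "0 \<in> M" using M unfolding minimal_right_ideal_def right_ideal_def by blast
  then obtain d where d: "d \<in> M" "d \<noteq> 0" using M unfolding minimal_right_ideal_def by blast
  have dJ: "d * j = 0" if "j \<in> jacobson" for j using minimal_ann[OF L M d(1) that] .
  obtain x c where x: "x \<in> center" and c: "c \<in> center" "c \<noteq> 0" and dx: "d * x = c"
    using CE d(2) unfolding centrally_essential_def by blast
  have cJ: "c * j = 0" if j: "j \<in> jacobson" for j
  proof -
    have "c * j = d * (x * j)" using dx[symmetric] by (simp add: mult.assoc)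
    also have "\<dots> = d * (j * x)" using x center_comm by metis
    also have "\<dots> = (d * j) * x" by (simp add: mult.assoc)
    finally show ?thesis using dJ[OF j] by simp
  qed
  have key: "a * b - b * a \<in> jacobson" if a: "a \<notin> jacobson" for a b :: 'a
  proof -
    have "c * a \<noteq> 0" using cancel_unit[OF L _ a] c by blast
    then obtain x' y' where x': "x' \<in> center" "x' \<noteq> 0" and y': "y' \<in> center" "y' \<noteq> 0"
      and cax: "c * a * x' = y'"
      using CE unfolding centrally_essential_def by blast
    have x'J: "x' \<notin> jacobson"
    proof
      assume "x' \<in> jacobson"
      then have "c * x' = 0" using cJ by blast
      moreover have "c * a * x' = a * (c * x')"
      proof -
        have "c * a = a * c" using c(1) center_comm by blast
        then show ?thesis by (simp add: mult.assoc)
      qed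
      ultimately show False using cax y' by simp
    qed
    have c'n: "c * x' \<noteq> 0"
    proof
      assume "c * x' = 0"
      then show False using cancel_unit[OF L _ x'J] c(2) by blast
    qed
    have c'C: "c * x' \<in> center" using center_mult c x' by blast
    have e1: "c * x' * (a * b) = y' * b"
    proof -
      have "c * x' * (a * b) = c * (x' * a) * b" by (simp add: mult.assoc)
      also have "\<dots> = c * (a * x') * b" using x' center_comm by metis
      also have "\<dots> = (c * a * x') * b" by (simp add: mult.assoc)
      finally show ?thesis using cax by simp
    qed
    have e2: "c * x' * (b * a) = b * y'"
    proof -
      have "c * x' * (b * a) = (c * x' * b) * a" by (simp add: mult.assoc)
      also have "\<dots> = b * (c * x') * a" using c'C center_comm by metis
      also have "\<dots> = b * (c * (x' * a))" by (simp add: mult.assoc)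
      also have "\<dots> = b * (c * (a * x'))" using x' center_comm by metis
      finally show ?thesis using cax by (simp add: mult.assoc)
    qed
    have "c * x' * (a * b - b * a) = c * x' * (a * b) - c * x' * (b * a)" by (simp add: right_diff_distrib)
    also have "\<dots> = y' * b - b * y'" using e1 e2 by simp
    also have "\<dots> = 0" using y'(1) center_comm by simp
    finally have "c * x' * (a * b - b * a) = 0" .
    then show ?thesis using cancel_unit[OF L] c'n by blast
  qed
  show ?thesis unfolding quotient_jacobson_commutative_def
  proof (intro allI)
    fix a b :: 'a
    show "a * b - b * a \<in> jacobson"
    proof (cases "a \<in> jacobson")
      case False then show ?thesis using key by blast
    next
      case aJ: True
      show ?thesis
      proof (cases "b \<in> jacobson")
        case False
        then have "b * a - a * b \<in> jacobson" using key by blast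
        then have "- (b * a - a * b) \<in> jacobson" using jac_ri unfolding right_ideal_def by blast
        then show ?thesis by simp
      next
        case True
        have "a * b \<in> jacobson" "b * a \<in> jacobson" using aJ True jac_ri unfolding right_ideal_def by blast+
        then show ?thesis using ri_diff jac_ri by blast
      qed
    qed
  qed
qed

lemma part1_min:
  assumes CE: "centrally_essential T" and M: "minimal_right_ideal (M::'a set)"
  shows "center \<inter> M \<noteq> {0}"
proof -
  have "0 \<in> M" using M unfolding minimal_right_ideal_def right_ideal_def by blast
  then obtain d where d: "d \<in> M" "d \<noteq> 0" using M unfolding minimal_right_ideal_def by blast
  obtain x y where y: "y \<in> center" "y \<noteq> 0" and dx: "d * x = y"
    using CE d(2) unfolding centrally_essential_def by blast
  have "y \<in> M" using dx d(1) M unfolding minimal_right_ideal_def right_ideal_def by blast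
  then show ?thesis using y by blast
qed


lemma sum_of_sub: "add_subgroup S \<Longrightarrow> \<Union>F \<subseteq> S \<Longrightarrow> sum_of F \<subseteq> S"
  unfolding sum_of_def by blast

lemma in_sum_of: "x \<in> N \<Longrightarrow> N \<in> F \<Longrightarrow> x \<in> sum_of F"
  unfolding sum_of_def by blast

lemma soc_right_sub: "x \<in> (soc_right::'a set) \<Longrightarrow> j \<in> jacobson \<Longrightarrow> x * j = 0"
proof -
  assume x: "x \<in> (soc_right::'a set)" and j: "j \<in> jacobson"
  let ?S = "{s::'a. \<forall>j\<in>jacobson. s * j = 0}"
  have "add_subgroup ?S" unfolding add_subgroup_def by (simp add: distrib_right)
  moreover have "\<Union>{M. minimal_right_ideal M} \<subseteq> ?S" using minimal_ann[OF L] by blast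
  ultimately have "soc_right \<subseteq> ?S" unfolding soc_right_def by (rule sum_of_sub)
  then show ?thesis using x j by blast
qed

lemma A_sub_soc_center:
  assumes r: "\<forall>c\<in>center. c \<in> jacobson \<longrightarrow> (r::'a) * c = 0"
  shows "r \<in> soc_center"
proof (cases "r = 0")
  case True
  then show ?thesis unfolding soc_center_def sum_of_def add_subgroup_def by blast
next
  case rn: False
  let ?N = "{r * c | c. c \<in> center}"
  have CS: "C_submodule ?N"
    unfolding C_submodule_def add_subgroup_def
  proof (intro conjI ballI)
    show "0 \<in> ?N" using center_0 by force
    fix x y assume "x \<in> ?N" "y \<in> ?N"
    then obtain a b where "x = r * a" "y = r * b" "a \<in> center" "b \<in> center" by blast
    then have "x + y = r * (a + b)" "a + b \<in> center" by (simp_all add: distrib_left center_add)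
    then show "x + y \<in> ?N" by blast
  next
    fix x assume "x \<in> ?N"
    then obtain a where "x = r * a" "a \<in> center" by blast
    then have "- x = r * (- a)" "- a \<in> center" by (simp_all add: center_neg)
    then show "- x \<in> ?N" by blast
  next
    fix x c :: 'a assume "x \<in> ?N" "c \<in> center"
    then obtain a where "x = r * a" "a \<in> center" by blast
    then have "x * c = r * (a * c)" "a * c \<in> center" using \<open>c \<in> center\<close>
      by (simp_all add: mult.assoc center_mult)
    then show "x * c \<in> ?N" by blast
  qed
  have rN: "r \<in> ?N" using center_1 by force
  have "simple_C_submodule ?N"
    unfolding simple_C_submodule_def
  proof (intro conjI allI impI)
    show "C_submodule ?N" by (rule CS)
    show "?N \<noteq> {0}" using rN rn by blast
    fix K assume K: "C_submodule K \<and> K \<subseteq> ?N"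
    show "K = {0} \<or> K = ?N"
    proof (cases "K = {0}")
      case False
      have "0 \<in> K" using K unfolding C_submodule_def add_subgroup_def by blast
      then obtain k where k: "k \<in> K" "k \<noteq> 0" using False by blast
      then obtain c where c: "k = r * c" "c \<in> center" using K by blast
      have cJ: "c \<notin> jacobson" using r c k by blast
      obtain c' where c': "c * c' = 1" "c' * c = 1" using unit[OF L cJ] by blast
      have c'C: "c' \<in> center" using center_inv c c' by blast
      have "?N \<subseteq> K"
      proof
        fix z assume "z \<in> ?N"
        then obtain e where e: "z = r * e" "e \<in> center" by blast
        have "z = r * (c * c') * e" using e c' by simp
        also have "\<dots> = k * (c' * e)" using c by (simp add: mult.assoc)
        finally have "z = k * (c' * e)" .
        moreover have "c' * e \<in> center" using c'C e center_mult by blast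
        ultimately show "z \<in> K" using K k unfolding C_submodule_def by blast
      qed
      then show ?thesis using K by blast
    qed simp
  qed
  then show ?thesis unfolding soc_center_def using in_sum_of[OF rN] by blast
qed

lemma push_down:
  assumes an: "(a::'a) \<noteq> 0"
  shows "\<exists>x\<in>center. a * x \<noteq> 0 \<and> (\<forall>c\<in>center. c \<in> jacobson \<longrightarrow> a * x * c = 0)"
proof (rule ccontr)
  assume no: "\<not> ?thesis"
  have step: "\<exists>c. c \<in> center \<and> c \<in> jacobson \<and> a * x * c \<noteq> 0"
    if "x \<in> center" "a * x \<noteq> 0" for x using no that by blast
  define ch where "ch x = (SOME c. c \<in> center \<and> c \<in> jacobson \<and> a * x * c \<noteq> 0)" for x
  have chP: "ch x \<in> center \<and> ch x \<in> jacobson \<and> a * x * ch x \<noteq> 0"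
    if "x \<in> center" "a * x \<noteq> 0" for x
    unfolding ch_def using someI_ex[OF step[OF that]] .
  define f :: "nat \<Rightarrow> 'a" where "f = rec_nat 1 (\<lambda>_ x. x * ch x)"
  have fS: "f (Suc n) = f n * ch (f n)" for n by (simp add: f_def)
  have inv: "f n \<in> center \<and> a * f n \<noteq> 0" for n
  proof (induction n)
    case 0
    then show ?case using an center_1 by (simp add: f_def)
  next
    case (Suc n)
    have h: "ch (f n) \<in> center \<and> ch (f n) \<in> jacobson \<and> a * f n * ch (f n) \<noteq> 0"
      using chP Suc by blast
    have "f (Suc n) \<in> center" using fS[of n] center_mult[of "f n" "ch (f n)"] Suc h by simp
    moreover have "a * f (Suc n) = a * f n * ch (f n)" using fS[of n] by (simp only: mult.assoc)
    ultimately show ?case using h by simp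
  qed
  have cn: "ch (f n) \<in> jacobson" for n using chP inv by blast
  define g where "g n = range (\<lambda>r. a * f n * r)" for n
  have gri: "right_ideal (g n)" for n unfolding g_def by (rule ri_range)
  have gsub: "g (Suc n) \<subseteq> g n" for n
  proof
    fix z assume "z \<in> g (Suc n)"
    then obtain r where "z = a * f (Suc n) * r" unfolding g_def by blast
    then have "z = a * f n * (ch (f n) * r)"
      using fS[of n] by (simp add: mult.assoc)
    then show "z \<in> g n" unfolding g_def by blast
  qed
  obtain N where N: "\<forall>n\<ge>N. g n = g N" using Ar gri gsub unfolding right_artinian_def by blast
  have "Suc N \<ge> N" by simp
  then have gN: "g (Suc N) = g N" using N by blast
  let ?y = "a * f N"
  let ?c = "ch (f N)"
  have "?y \<in> g N" unfolding g_def by (metis mult_1_right rangeI)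
  then have "?y \<in> g (Suc N)" using gN by simp
  then obtain r where yr0: "?y = a * f (Suc N) * r" unfolding g_def by blast
  have "a * f (Suc N) * r = ?y * (?c * r)" using fS[of N] by (simp add: mult.assoc)
  with yr0 have yr: "?y = ?y * (?c * r)" by (rule trans)
  have cr: "?c * r \<in> jacobson" using cn[of N] jac_ri unfolding right_ideal_def by blast
  have "?y * (1 - ?c * r) = 0" using yr by (simp add: right_diff_distrib)
  moreover have "1 - ?c * r \<notin> jacobson"
  proof
    assume "1 - ?c * r \<in> jacobson"
    then have "(1 - ?c * r) + ?c * r \<in> jacobson" using cr jac_ri unfolding right_ideal_def by blast
    then show False using one_notin_jac[OF L] by simp
  qed
  ultimately have "?y = 0" using cancel_unit[OF L] by blast
  then show False using inv[of N] by simp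
qed

lemma part2:
  assumes Qc: "quotient_jacobson_commutative T" and Soc: "(soc_center::'a set) = soc_right"
    and Mn: "\<forall>M::'a set. minimal_right_ideal M \<longrightarrow> center \<inter> M \<noteq> {0}"
  shows "centrally_essential T"
  unfolding centrally_essential_def
proof (intro allI impI)
  fix a :: 'a assume an: "a \<noteq> 0"
  obtain x where x: "x \<in> center" and sn: "a * x \<noteq> 0"
    and sA: "\<forall>c\<in>center. c \<in> jacobson \<longrightarrow> a * x * c = 0"
    using push_down[OF an] by blast
  let ?s = "a * x"
  have "?s \<in> soc_right" using A_sub_soc_center[OF sA] Soc by simp
  then have sS: "?s * j = 0" if "j \<in> jacobson" for j using soc_right_sub that by blast
  let ?M = "range (\<lambda>r. ?s * r)"
  have sM: "?s \<in> ?M" by (metis mult_1_right rangeI)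
  have "minimal_right_ideal ?M"
    unfolding minimal_right_ideal_def
  proof (intro conjI allI impI)
    show "right_ideal ?M" by (rule ri_range)
    show "?M \<noteq> {0}" using sM sn by blast
    fix I assume I: "right_ideal I \<and> I \<subseteq> ?M"
    show "I = {0} \<or> I = ?M"
    proof (cases "I = {0}")
      case False
      have "0 \<in> I" using I unfolding right_ideal_def by blast
      then obtain k where k: "k \<in> I" "k \<noteq> 0" using False by blast
      then obtain r where r: "k = ?s * r" using I by blast
      have rJ: "r \<notin> jacobson" using sS r k by blast
      obtain r' where r': "r * r' = 1" using unit[OF L rJ] by blast
      have "?M \<subseteq> I"
      proof
        fix z assume "z \<in> ?M"
        then obtain t where t: "z = ?s * t" by blast
        have "z = ?s * (r * r') * t" using t r' by simp
        also have "\<dots> = k * (r' * t)" using r by (simp add: mult.assoc)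
        finally show "z \<in> I" using I k unfolding right_ideal_def by blast
      qed
      then show ?thesis using I by blast
    qed simp
  qed
  then have "center \<inter> ?M \<noteq> {0}" using Mn by blast
  moreover have "0 \<in> center \<inter> ?M" using center_0 by (metis IntI mult_zero_right rangeI)
  ultimately obtain z where z: "z \<in> center" "z \<in> ?M" "z \<noteq> 0" by blast
  then obtain r where r: "z = ?s * r" by blast
  have rJ: "r \<notin> jacobson" using sS r z by (metis)
  obtain r' where r': "r * r' = 1" "r' * r = 1" using unit[OF L rJ] by blast
  have zS: "z * j = 0" if "j \<in> jacobson" for j
  proof -
    have "r * j \<in> jacobson" using jac_left[OF L that] .
    then have "?s * (r * j) = 0" using sS by blast
    then show ?thesis using r by (simp add: mult.assoc)
  qed
  have sz: "?s = z * r'"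
  proof -
    have e: "?s * r * r' = ?s" using r'(1) by (simp add: mult.assoc)
    show ?thesis using e r by simp
  qed
  have "z * r' \<in> center"
    unfolding center_def
  proof (intro CollectI allI)
    fix y
    have d: "r' * y - y * r' \<in> jacobson" using Qc unfolding quotient_jacobson_commutative_def by blast
    have "z * r' * y = z * (r' * y - y * r') + z * y * r'" by (simp add: algebra_simps)
    also have "\<dots> = z * y * r'" using zS[OF d] by simp
    also have "\<dots> = y * z * r'" using z(1) center_comm by metis
    finally show "z * r' * y = y * (z * r')" by (simp add: mult.assoc)
  qed
  moreover have "x \<noteq> 0" using sn by auto
  ultimately show "\<exists>x\<in>center. \<exists>y\<in>center. x \<noteq> 0 \<and> y \<noteq> 0 \<and> a * x = y"
    using x sz sn by metis
qed

end


theorem proposition3p4: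
  fixes T :: "'a::ring_1 itself"
  assumes "local_ring T" and "right_artinian T" and "\<not> division_ring T"
  shows "(centrally_essential T \<longrightarrow>
            quotient_jacobson_commutative T \<and>
            (\<forall>M::'a set. minimal_right_ideal M \<longrightarrow> center \<inter> M \<noteq> {0}))
       \<and> (quotient_jacobson_commutative T \<and> (soc_center :: 'a set) = soc_right \<and>
            (\<forall>M::'a set. minimal_right_ideal M \<longrightarrow> center \<inter> M \<noteq> {0})
          \<longrightarrow> centrally_essential T)"
  using part1_comm[OF assms(1,2)] part1_min[OF assms(1,2)] part2[OF assms(1,2)] by blast

end
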